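(* Let $F/{\mathbf Q}$ be a totally real Galois extension of degree $2^d$. Suppose there is $\alpha\in F$ with $\operatorname{N}_{F/{\mathbf Q}}(\alpha)<0$ such that the ideal $(\alpha)$ is fixed by $\operatorname{Gal}(F/{\mathbf Q})$. Then for every assignment of signs $\pm1$ to the $2^d$ real embeddings of $F$ whose product is $1$, there is a unit of $\mathcal O_F$ whose signs under the real embeddings are exactly the given ones. *)

theory Defs
  imports "HOL-Analysis.Analysis" "HOL-Computational_Algebra.Polynomial"
begin

text \<open>Number fields are modelled as subfields of the complex numbers.\<close>

definition subfield_C :: "complex set \<Rightarrow> bool" where
  "subfield_C F \<longleftrightarrow> 0 \<in> F \<and> 1 \<in> F \<and>
     (\<forall>x\<in>F. \<forall>y\<in>F. x + y \<in> F \<and> x * y \<in> F) \<and>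
     (\<forall>x\<in>F. - x \<in> F \<and> inverse x \<in> F)"

definition degree_Q :: "complex set \<Rightarrow> nat" where
  "degree_Q F = vector_space.dim (\<lambda>q x. of_rat q * x) F"

text \<open>Field embeddings F -> C, normalised to 0 outside F so that there are
  finitely many of them.\<close>

definition embeddings :: "complex set \<Rightarrow> (complex \<Rightarrow> complex) set" where
  "embeddings F = {\<sigma>. (\<forall>x\<in>F. \<forall>y\<in>F. \<sigma> (x + y) = \<sigma> x + \<sigma> y \<and> \<sigma> (x * y) = \<sigma> x * \<sigma> y)
                      \<and> \<sigma> 1 = 1 \<and> (\<forall>x. x \<notin> F \<longrightarrow> \<sigma> x = 0)}"

definition totally_real :: "complex set \<Rightarrow> bool" where
  "totally_real F \<longleftrightarrow> (\<forall>\<sigma>\<in>embeddings F. \<sigma> ` F \<subseteq> \<real>)"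

text \<open>F/Q Galois (normal): every embedding maps F onto F; the Galois group is
  then the set of embeddings (viewed as automorphisms of F).\<close>

definition galois_Q :: "complex set \<Rightarrow> bool" where
  "galois_Q F \<longleftrightarrow> (\<forall>\<sigma>\<in>embeddings F. \<sigma> ` F = F)"

definition field_norm :: "complex set \<Rightarrow> complex \<Rightarrow> complex" where
  "field_norm F a = (\<Prod>\<sigma>\<in>embeddings F. \<sigma> a)"

definition ring_of_integers :: "complex set \<Rightarrow> complex set" where
  "ring_of_integers F = {x\<in>F. algebraic_int x}"

definition units_of_integers :: "complex set \<Rightarrow> complex set" where
  "units_of_integers F = {u\<in>ring_of_integers F. \<exists>v\<in>ring_of_integers F. u * v = 1}"

definition principal_ideal :: "complex set \<Rightarrow> complex \<Rightarrow> complex set" where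
  "principal_ideal F a = {a * x | x. x \<in> ring_of_integers F}"

end

theory Submission
  imports Defs "HOL-Algebra.Sylow" "HOL-Algebra.Group_Action" "HOL-Algebra.Multiplicative_Group" "Jordan_Normal_Form.Char_Poly"
begin

lemma sum_div_mod_reindex:
  fixes f :: "nat \<Rightarrow> nat \<Rightarrow> 'a::comm_monoid_add"
  assumes "m > 0"
  shows "(\<Sum>l<n*m. f (l div m) (l mod m)) = (\<Sum>a<n. \<Sum>b<m. f a b)"
proof -
  have bij: "bij_betw (\<lambda>(a,b). a*m+b) ({..<n} \<times> {..<m}) {..<n*m}"
  proof (rule bij_betwI[where g = "\<lambda>l. (l div m, l mod m)"])
    show "(\<lambda>(a, b). a * m + b) \<in> {..<n} \<times> {..<m} \<rightarrow> {..<n * m}"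
    proof
      fix ab assume "ab \<in> {..<n} \<times> {..<m}"
      then obtain a b where ab: "ab = (a,b)" "a < n" "b < m" by auto
      have "a * m + b < a * m + m" using ab by simp
      also have "\<dots> = Suc a * m" by simp
      also have "\<dots> \<le> n * m" using ab by (intro mult_right_mono) auto
      finally show "(case ab of (a, b) \<Rightarrow> a * m + b) \<in> {..<n * m}" using ab by simp
    qed
    show "(\<lambda>l. (l div m, l mod m)) \<in> {..<n * m} \<rightarrow> {..<n} \<times> {..<m}"
      using assms by (auto simp: less_mult_imp_div_less)
  next
    fix ab assume "ab \<in> {..<n} \<times> {..<m}"
    then show "(\<lambda>l. (l div m, l mod m)) ((\<lambda>(a,b). a*m+b) ab) = ab" using assms by auto
  next
    fix y :: nat
    show "(\<lambda>(a, b). a * m + b) (y div m, y mod m) = y" by simp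
  qed
  have "(\<Sum>l<n*m. f (l div m) (l mod m)) = (\<Sum>ab\<in>{..<n} \<times> {..<m}. f (((\<lambda>(a,b). a*m+b) ab) div m) (((\<lambda>(a,b). a*m+b) ab) mod m))"
    by (rule sum.reindex_bij_betw[OF bij, symmetric])
  also have "\<dots> = (\<Sum>ab\<in>{..<n} \<times> {..<m}. f (fst ab) (snd ab))"
    by (rule sum.cong) (use assms in auto)
  also have "\<dots> = (\<Sum>a<n. \<Sum>b<m. f a b)"
    by (simp add: sum.cartesian_product case_prod_beta)
  finally show ?thesis .
qed

lemma companion_step:
  fixes x :: complex
  assumes lc: "lead_coeff p = 1" and root: "poly p x = 0" and i: "i < degree p"
  defines "X \<equiv> \<lambda>i a. (if Suc i < degree p then (if a = Suc i then 1 else 0) else - poly.coeff p a)"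
  shows "x * x ^ i = (\<Sum>a<degree p. X i a * x ^ a)"
proof (cases "Suc i < degree p")
  case True
  then have "(\<Sum>a<degree p. X i a * x ^ a) = (\<Sum>a<degree p. (if a = Suc i then x ^ a else 0))"
    unfolding X_def by (intro sum.cong) auto
  also have "\<dots> = x ^ Suc i" using True by (simp add: sum.delta)
  finally show ?thesis by simp
next
  case False
  then have n: "degree p = Suc i" using i by simp
  have "0 = (\<Sum>a\<le>degree p. poly.coeff p a * x ^ a)" using root by (simp add: poly_altdef)
  also have "\<dots> = (\<Sum>a<degree p. poly.coeff p a * x ^ a) + x ^ degree p"
    using lc by (simp add: lessThan_Suc_atMost[symmetric] n)
  finally have "x ^ degree p = - (\<Sum>a<degree p. poly.coeff p a * x ^ a)"
    by (simp add: eq_neg_iff_add_eq_0 add.commute)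
  then show ?thesis using False unfolding X_def by (simp add: n sum_negf)
qed

lemma algebraic_int_mult:
  fixes x y :: complex
  assumes "algebraic_int x" "algebraic_int y"
  shows "algebraic_int (x * y)"
proof -
  from assms(1) obtain pi :: "int poly" where pi: "poly (map_poly of_int pi) x = 0" "lead_coeff pi = 1"
    using algebraic_int_altdef_ipoly by blast
  from assms(2) obtain qi :: "int poly" where qi: "poly (map_poly of_int qi) y = 0" "lead_coeff qi = 1"
    using algebraic_int_altdef_ipoly by blast
  define p where "p = (map_poly of_int pi :: complex poly)"
  define q where "q = (map_poly of_int qi :: complex poly)"
  have dp: "degree p = degree pi" by (simp add: p_def degree_map_poly)
  have dq: "degree q = degree qi" by (simp add: q_def degree_map_poly)
  have cp: "poly.coeff p a = of_int (poly.coeff pi a)" for a by (simp add: p_def coeff_map_poly)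
  have cq: "poly.coeff q a = of_int (poly.coeff qi a)" for a by (simp add: q_def coeff_map_poly)
  have p: "lead_coeff p = 1" "poly p x = 0" using pi dp cp by (auto simp: p_def)
  have q: "lead_coeff q = 1" "poly q y = 0" using qi dq cq by (auto simp: q_def)
  define n where "n = degree p"
  define m where "m = degree q"
  have n0: "n > 0"
  proof (rule ccontr)
    assume "\<not> n > 0"
    then have "degree p = 0" by (simp add: n_def)
    then have "[:poly.coeff p 0:] = p" by (rule degree_0_id)
    moreover have "poly.coeff p 0 = 1" using p(1) \<open>degree p = 0\<close> by simp
    ultimately have "p = [:1:]" by simp
    then show False using p(2) by simp
  qed
  have m0: "m > 0"
  proof (rule ccontr)
    assume "\<not> m > 0"
    then have "degree q = 0" by (simp add: m_def)
    then have "[:poly.coeff q 0:] = q" by (rule degree_0_id)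
    moreover have "poly.coeff q 0 = 1" using q(1) \<open>degree q = 0\<close> by simp
    ultimately have "q = [:1:]" by simp
    then show False using q(2) by simp
  qed
  define X where "X = (\<lambda>i a. (if Suc i < n then (if a = Suc i then 1 else 0) else - poly.coeff pi a) :: int)"
  define Y where "Y = (\<lambda>i a. (if Suc i < m then (if a = Suc i then 1 else 0) else - poly.coeff qi a) :: int)"
  have Xs: "x * x ^ i = (\<Sum>a<n. of_int (X i a) * x ^ a)" if "i < n" for i
  proof -
    have "x * x ^ i = (\<Sum>a<n. (if Suc i < n then (if a = Suc i then 1 else 0) else - poly.coeff p a) * x ^ a)"
      using companion_step[OF p(1) p(2), of i] that unfolding n_def by simp
    also have "\<dots> = (\<Sum>a<n. of_int (X i a) * x ^ a)"
      by (rule sum.cong) (auto simp: X_def cp)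
    finally show ?thesis .
  qed
  have Ys: "y * y ^ j = (\<Sum>b<m. of_int (Y j b) * y ^ b)" if "j < m" for j
  proof -
    have "y * y ^ j = (\<Sum>b<m. (if Suc j < m then (if b = Suc j then 1 else 0) else - poly.coeff q b) * y ^ b)"
      using companion_step[OF q(1) q(2), of j] that unfolding m_def by simp
    also have "\<dots> = (\<Sum>b<m. of_int (Y j b) * y ^ b)"
      by (rule sum.cong) (auto simp: Y_def cq)
    finally show ?thesis .
  qed
  define N where "N = n * m"
  define A :: "int mat" where "A = mat N N (\<lambda>(k,l). X (k div m) (l div m) * Y (k mod m) (l mod m))"
  define w :: "complex vec" where "w = vec N (\<lambda>k. x ^ (k div m) * y ^ (k mod m))"
  define B :: "complex mat" where "B = map_mat of_int A"
  have AN: "A \<in> carrier_mat N N" by (simp add: A_def)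
  have BN: "B \<in> carrier_mat N N" by (simp add: B_def A_def)
  have N0: "N > 0" using n0 m0 by (simp add: N_def)
  have "B *\<^sub>v w = (x * y) \<cdot>\<^sub>v w"
  proof (rule eq_vecI)
    fix k assume k: "k < dim_vec ((x * y) \<cdot>\<^sub>v w)"
    then have kN: "k < N" by (simp add: w_def)
    have kn: "k div m < n" using kN by (simp add: N_def less_mult_imp_div_less)
    have km: "k mod m < m" using m0 by simp
    have "(B *\<^sub>v w) $ k = (\<Sum>l<N. of_int (X (k div m) (l div m) * Y (k mod m) (l mod m)) * (x ^ (l div m) * y ^ (l mod m)))"
      using kN by (simp add: B_def A_def w_def mult_mat_vec_def scalar_prod_def lessThan_atLeast0)
    also have "\<dots> = (\<Sum>a<n. \<Sum>b<m. of_int (X (k div m) a * Y (k mod m) b) * (x ^ a * y ^ b))"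
      unfolding N_def by (rule sum_div_mod_reindex[OF m0])
    also have "\<dots> = (\<Sum>a<n. of_int (X (k div m) a) * x ^ a) * (\<Sum>b<m. of_int (Y (k mod m) b) * y ^ b)"
      by (simp add: sum_product mult_ac)
    also have "\<dots> = (x * x ^ (k div m)) * (y * y ^ (k mod m))"
      using Xs[OF kn] Ys[OF km] by simp
    also have "\<dots> = ((x * y) \<cdot>\<^sub>v w) $ k" using kN by (simp add: w_def mult_ac)
    finally show "(B *\<^sub>v w) $ k = ((x * y) \<cdot>\<^sub>v w) $ k" .
  next
    show "dim_vec (B *\<^sub>v w) = dim_vec ((x * y) \<cdot>\<^sub>v w)" using BN by (simp add: w_def)
  qed
  moreover have "w \<noteq> 0\<^sub>v N"
  proof
    assume "w = 0\<^sub>v N"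
    then have "w $ 0 = 0" using N0 by simp
    then show False using N0 m0 by (simp add: w_def)
  qed
  ultimately have "eigenvector B w (x * y)"
    unfolding eigenvector_def using BN by (simp add: w_def)
  then have "eigenvalue B (x * y)" unfolding eigenvalue_def by blast
  then have "poly (char_poly B) (x * y) = 0" using eigenvalue_root_char_poly[OF BN] by simp
  moreover have "char_poly B = map_poly of_int (char_poly A)"
    unfolding B_def by (rule of_int_hom.char_poly_hom[OF AN])
  moreover have "lead_coeff (char_poly A) = 1" using degree_monic_char_poly[OF AN] by simp
  ultimately show ?thesis
    by (subst algebraic_int_altdef_ipoly) auto
qed

locale sfield =
  fixes F :: "complex set"
  assumes sub: "subfield_C F"
begin

lemma F0[simp]: "0 \<in> F" and F1[simp]: "1 \<in> F"
  using sub by (auto simp: subfield_C_def)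
lemma Fadd[intro]: "x \<in> F \<Longrightarrow> y \<in> F \<Longrightarrow> x + y \<in> F"
  using sub by (auto simp: subfield_C_def)
lemma Fmult[intro]: "x \<in> F \<Longrightarrow> y \<in> F \<Longrightarrow> x * y \<in> F"
  using sub by (auto simp: subfield_C_def)
lemma Fuminus[intro]: "x \<in> F \<Longrightarrow> - x \<in> F"
  using sub by (auto simp: subfield_C_def)
lemma Finverse[intro]: "x \<in> F \<Longrightarrow> inverse x \<in> F"
  using sub by (auto simp: subfield_C_def)
lemma Fdiff[intro]: "x \<in> F \<Longrightarrow> y \<in> F \<Longrightarrow> x - y \<in> F"
  using Fadd Fuminus by (metis diff_conv_add_uminus)
lemma Fdivide[intro]: "x \<in> F \<Longrightarrow> y \<in> F \<Longrightarrow> x / y \<in> F"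
  using Fmult Finverse by (metis divide_inverse)
lemma Fsum[intro]: "(\<And>i. i \<in> A \<Longrightarrow> f i \<in> F) \<Longrightarrow> sum f A \<in> F"
  by (induction A rule: infinite_finite_induct) auto
lemma Fprod[intro]: "(\<And>i. i \<in> A \<Longrightarrow> f i \<in> F) \<Longrightarrow> prod f A \<in> F"
  by (induction A rule: infinite_finite_induct) auto
lemma Fpower[intro]: "x \<in> F \<Longrightarrow> x ^ n \<in> F"
  by (induction n) auto
lemma Fof_nat[simp]: "of_nat n \<in> F"
  by (induction n) auto
lemma Fof_int[simp]: "of_int n \<in> F"
proof (cases "n \<ge> 0")
  case True
  then have "(of_int n::complex) = of_nat (nat n)" by simp
  then show ?thesis by simp
next
  case False
  then have "(of_int n::complex) = - of_nat (nat (- n))" by simp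
  then show ?thesis using Fuminus[OF Fof_nat] by simp
qed
lemma Fof_rat[simp]: "of_rat q \<in> F"
proof (cases q)
  case (Fract a b)
  then have "(of_rat q::complex) = of_int a / of_int b" by (simp add: of_rat_rat)
  then show ?thesis using Fdivide[OF Fof_int Fof_int] by simp
qed

definition E where "E = embeddings F"

context
  fixes \<sigma> assumes s: "\<sigma> \<in> E"
begin
lemma e_add[simp]: "x \<in> F \<Longrightarrow> y \<in> F \<Longrightarrow> \<sigma> (x + y) = \<sigma> x + \<sigma> y"
  using s by (auto simp: E_def embeddings_def)
lemma e_mult[simp]: "x \<in> F \<Longrightarrow> y \<in> F \<Longrightarrow> \<sigma> (x * y) = \<sigma> x * \<sigma> y"
  using s by (auto simp: E_def embeddings_def)
lemma e_1[simp]: "\<sigma> 1 = 1"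
  using s by (auto simp: E_def embeddings_def)
lemma e_out: "x \<notin> F \<Longrightarrow> \<sigma> x = 0"
  using s by (auto simp: E_def embeddings_def)
lemma e_0[simp]: "\<sigma> 0 = 0"
  using e_add[of 0 0] by simp
lemma e_uminus[simp]: "x \<in> F \<Longrightarrow> \<sigma> (- x) = - \<sigma> x"
proof -
  assume x: "x \<in> F"
  have "\<sigma> x + \<sigma> (- x) = 0" using e_add[of x "-x"] x Fuminus[OF x] by simp
  then show ?thesis by (metis add.inverse_unique)
qed
lemma e_diff[simp]: "x \<in> F \<Longrightarrow> y \<in> F \<Longrightarrow> \<sigma> (x - y) = \<sigma> x - \<sigma> y"
  using e_add[of x "-y"] by auto
lemma e_nonzero: "x \<in> F \<Longrightarrow> x \<noteq> 0 \<Longrightarrow> \<sigma> x \<noteq> 0"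
  using e_mult[of x "inverse x"] Finverse[of x] by auto
lemma e_inverse[simp]: "x \<in> F \<Longrightarrow> \<sigma> (inverse x) = inverse (\<sigma> x)"
proof (cases "x = 0")
  case False
  assume "x \<in> F"
  then have "\<sigma> x * \<sigma> (inverse x) = 1" using e_mult[of x "inverse x"] False by auto
  then show ?thesis by (simp add: inverse_unique)
qed simp
lemma e_divide[simp]: "x \<in> F \<Longrightarrow> y \<in> F \<Longrightarrow> \<sigma> (x / y) = \<sigma> x / \<sigma> y"
  using e_mult[of x "inverse y"] Finverse[of y] by (simp add: divide_inverse)
lemma e_sum[simp]: "(\<And>i. i \<in> A \<Longrightarrow> f i \<in> F) \<Longrightarrow> \<sigma> (sum f A) = (\<Sum>i\<in>A. \<sigma> (f i))"
proof (induction A rule: infinite_finite_induct)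
  case (insert a A)
  have "sum f A \<in> F" "f a \<in> F" using insert.prems by (auto intro!: Fsum)
  then show ?case using insert by simp
qed auto
lemma e_prod[simp]: "(\<And>i. i \<in> A \<Longrightarrow> f i \<in> F) \<Longrightarrow> \<sigma> (prod f A) = (\<Prod>i\<in>A. \<sigma> (f i))"
proof (induction A rule: infinite_finite_induct)
  case (insert a A)
  have "prod f A \<in> F" "f a \<in> F" using insert.prems by (auto intro!: Fprod)
  then show ?case using insert by simp
qed auto
lemma e_power[simp]: "x \<in> F \<Longrightarrow> \<sigma> (x ^ n) = \<sigma> x ^ n"
proof (induction n)
  case (Suc n)
  have "x ^ n \<in> F" using Suc.prems by (rule Fpower)
  then show ?case using Suc by simp
qed simp
lemma e_of_nat[simp]: "\<sigma> (of_nat n) = of_nat n"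
  by (induction n) auto
lemma e_of_int[simp]: "\<sigma> (of_int n) = of_int n"
proof (cases "n \<ge> 0")
  case True
  then have "(of_int n::complex) = of_nat (nat n)" by simp
  then show ?thesis by simp
next
  case False
  then have "(of_int n::complex) = - of_nat (nat (- n))" by simp
  then show ?thesis by simp
qed
lemma e_of_rat[simp]: "\<sigma> (of_rat q) = of_rat q"
proof (cases q)
  case (Fract a b)
  then have "(of_rat q::complex) = of_int a / of_int b" by (simp add: of_rat_rat)
  then show ?thesis by simp
qed
lemma e_inj: "inj_on \<sigma> F"
proof (rule inj_onI)
  fix x y assume "x \<in> F" "y \<in> F" "\<sigma> x = \<sigma> y"
  then have "\<sigma> (x - y) = 0" by simp
  then show "x = y" using e_nonzero[of "x - y"] \<open>x \<in> F\<close> \<open>y \<in> F\<close> by auto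
qed
lemma e_poly_int:
  assumes "x \<in> F" "\<forall>i. poly.coeff p i \<in> \<int>"
  shows "\<sigma> (poly p x) = poly p (\<sigma> x)"
proof -
  have cc: "poly.coeff p i \<in> F \<and> \<sigma> (poly.coeff p i) = poly.coeff p i" for i
  proof -
    from assms(2) have "poly.coeff p i \<in> \<int>" by auto
    then obtain n where "poly.coeff p i = of_int n" by (auto elim: Ints_cases)
    then show ?thesis by simp
  qed
  have c: "poly.coeff p i \<in> F" for i using cc by blast
  have ci: "\<sigma> (poly.coeff p i) = poly.coeff p i" for i using cc by blast
  have "\<sigma> (poly p x) = (\<Sum>i\<le>degree p. \<sigma> (poly.coeff p i * x ^ i))"
    unfolding poly_altdef by (rule e_sum) (use c assms(1) in auto)
  also have "\<dots> = (\<Sum>i\<le>degree p. poly.coeff p i * \<sigma> x ^ i)"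
    by (rule sum.cong) (use c ci assms(1) Fpower in auto)
  finally show ?thesis unfolding poly_altdef .
qed
lemma e_algebraic_int: "x \<in> F \<Longrightarrow> algebraic_int x \<Longrightarrow> algebraic_int (\<sigma> x)"
proof -
  assume x: "x \<in> F" "algebraic_int x"
  from x(2) obtain p where p: "lead_coeff p = 1" "\<forall>i. poly.coeff p i \<in> \<int>" "poly p x = 0"
    by (cases rule: algebraic_int.cases) blast
  have "poly p (\<sigma> x) = 0" using e_poly_int[OF x(1) p(2)] p(3) by simp
  then show ?thesis by (rule algebraic_int.intros[OF p(1) p(2)])
qed
end

lemma idF_E: "(\<lambda>x. if x \<in> F then x else 0) \<in> E"
  unfolding E_def embeddings_def using Fadd Fmult by simp

end

interpretation Qvs: vector_space "\<lambda>(q::rat) (x::complex). of_rat q * x"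
  by unfold_locales (simp_all add: distrib_left distrib_right of_rat_add of_rat_mult mult.assoc)

lemma degree_Q_Qvs: "degree_Q F = Qvs.dim F"
  by (simp add: degree_Q_def)

locale galF = sfield +
  assumes gal: "galois_Q F"
begin

definition idF where "idF = (\<lambda>x. if x \<in> F then x else 0)"

definition Gr :: "(complex \<Rightarrow> complex) monoid" where
  "Gr = \<lparr>carrier = E, mult = (\<lambda>s t. s \<circ> t), one = idF\<rparr>"

lemma Gr_simps[simp]: "carrier Gr = E" "x \<otimes>\<^bsub>Gr\<^esub> y = x \<circ> y" "\<one>\<^bsub>Gr\<^esub> = idF"
  by (simp_all add: Gr_def)

lemma idF_in_E[simp]: "idF \<in> E"
  using idF_E by (simp add: idF_def)

lemma e_onto: "\<sigma> \<in> E \<Longrightarrow> \<sigma> ` F = F"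
  using gal by (simp add: galois_Q_def E_def)

lemma e_in[intro]: "\<sigma> \<in> E \<Longrightarrow> x \<in> F \<Longrightarrow> \<sigma> x \<in> F"
  using e_onto by blast

lemma comp_E[intro]: assumes s: "\<sigma> \<in> E" and t: "\<tau> \<in> E" shows "\<sigma> \<circ> \<tau> \<in> E"
proof -
  have "(\<sigma> \<circ> \<tau>) (x + y) = (\<sigma> \<circ> \<tau>) x + (\<sigma> \<circ> \<tau>) y \<and> (\<sigma> \<circ> \<tau>) (x * y) = (\<sigma> \<circ> \<tau>) x * (\<sigma> \<circ> \<tau>) y"
    if "x \<in> F" "y \<in> F" for x y
    using that s t e_in[OF t that(1)] e_in[OF t that(2)] by simp
  moreover have "(\<sigma> \<circ> \<tau>) x = 0" if "x \<notin> F" for x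
    using that s t e_out[OF t that] by simp
  ultimately show ?thesis using s t unfolding E_def embeddings_def by simp
qed

lemma idF_comp[simp]: assumes s: "\<sigma> \<in> E" shows "idF \<circ> \<sigma> = \<sigma>"
proof (rule ext)
  fix x show "(idF \<circ> \<sigma>) x = \<sigma> x"
  proof (cases "x \<in> F")
    case True then show ?thesis using e_in[OF s True] by (simp add: idF_def)
  next
    case False then have "\<sigma> x = 0" using e_out[OF s] by blast
    then show ?thesis by (simp add: idF_def)
  qed
qed

lemma comp_idF[simp]: assumes s: "\<sigma> \<in> E" shows "\<sigma> \<circ> idF = \<sigma>"
proof (rule ext)
  fix x show "(\<sigma> \<circ> idF) x = \<sigma> x"
  proof (cases "x \<in> F")
    case True then show ?thesis by (simp add: idF_def)
  next
    case False then have "\<sigma> x = 0" using e_out[OF s] by blast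
    then show ?thesis using False s by (simp add: idF_def)
  qed
qed

definition invE where "invE \<sigma> = (\<lambda>y. if y \<in> F then inv_into F \<sigma> y else 0)"

lemma invE_E: assumes s: "\<sigma> \<in> E" shows "invE \<sigma> \<in> E"
proof -
  have inj: "inj_on \<sigma> F" using e_inj[OF s] .
  have ont: "\<sigma> ` F = F" using e_onto[OF s] .
  have iv: "invE \<sigma> (\<sigma> z) = z" if "z \<in> F" for z
    using that inj e_in[OF s that] by (simp add: invE_def inv_into_f_f)
  have "invE \<sigma> (x + y) = invE \<sigma> x + invE \<sigma> y \<and> invE \<sigma> (x * y) = invE \<sigma> x * invE \<sigma> y"
    if xy: "x \<in> F" "y \<in> F" for x y
  proof -
    obtain x' where x': "x' \<in> F" "x = \<sigma> x'" using xy(1) ont by blast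
    obtain y' where y': "y' \<in> F" "y = \<sigma> y'" using xy(2) ont by blast
    have "x + y = \<sigma> (x' + y')" "x * y = \<sigma> (x' * y')" using x' y' s by simp_all
    then show ?thesis using x' y' iv Fadd Fmult by simp
  qed
  moreover have "invE \<sigma> 1 = 1" using iv[of 1] s by simp
  moreover have "invE \<sigma> x = 0" if "x \<notin> F" for x using that by (simp add: invE_def)
  ultimately show ?thesis unfolding E_def embeddings_def by simp
qed

lemma invE_comp: assumes s: "\<sigma> \<in> E" shows "invE \<sigma> \<circ> \<sigma> = idF"
proof (rule ext)
  fix x
  have inj: "inj_on \<sigma> F" using e_inj[OF s] .
  show "(invE \<sigma> \<circ> \<sigma>) x = idF x"
  proof (cases "x \<in> F")
    case True
    then show ?thesis using inj e_in[OF s True] by (simp add: invE_def idF_def inv_into_f_f)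
  next
    case False
    have "inv_into F \<sigma> (\<sigma> 0) = 0" using inj by (simp add: inv_into_f_f)
    then show ?thesis using False s e_out[OF s False] by (simp add: invE_def idF_def)
  qed
qed

lemma group_Gr: "group Gr"
proof (rule groupI)
  show "\<exists>y\<in>carrier Gr. y \<otimes>\<^bsub>Gr\<^esub> x = \<one>\<^bsub>Gr\<^esub>" if "x \<in> carrier Gr" for x
  proof
    show "invE x \<in> carrier Gr" using that invE_E by simp
    show "invE x \<otimes>\<^bsub>Gr\<^esub> x = \<one>\<^bsub>Gr\<^esub>" using that invE_comp by simp
  qed
next
  show "x \<otimes>\<^bsub>Gr\<^esub> y \<in> carrier Gr" if "x \<in> carrier Gr" "y \<in> carrier Gr" for x y
    using that comp_E by simp
next
  show "\<one>\<^bsub>Gr\<^esub> \<in> carrier Gr" by simp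
next
  show "x \<otimes>\<^bsub>Gr\<^esub> y \<otimes>\<^bsub>Gr\<^esub> z = x \<otimes>\<^bsub>Gr\<^esub> (y \<otimes>\<^bsub>Gr\<^esub> z)" for x y z
    by (simp add: comp_assoc)
next
  show "\<one>\<^bsub>Gr\<^esub> \<otimes>\<^bsub>Gr\<^esub> x = x" if "x \<in> carrier Gr" for x
    using that by simp
qed

sublocale Grp: group Gr by (rule group_Gr)

lemma pow_E[simp]: "\<sigma> \<in> E \<Longrightarrow> \<sigma> [^]\<^bsub>Gr\<^esub> (n::nat) \<in> E"
  using Grp.nat_pow_closed by simp

lemma pow_Suc_app: "\<sigma> \<in> E \<Longrightarrow> (\<sigma> [^]\<^bsub>Gr\<^esub> Suc (n::nat)) x = \<sigma> ((\<sigma> [^]\<^bsub>Gr\<^esub> n) x)"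
  using Grp.nat_pow_Suc2[of \<sigma> n] by simp

lemma pow_add_app: "\<sigma> \<in> E \<Longrightarrow> (\<sigma> [^]\<^bsub>Gr\<^esub> ((m::nat) + n)) x = (\<sigma> [^]\<^bsub>Gr\<^esub> m) ((\<sigma> [^]\<^bsub>Gr\<^esub> n) x)"
proof -
  assume s: "\<sigma> \<in> E"
  have "\<sigma> [^]\<^bsub>Gr\<^esub> m \<circ> \<sigma> [^]\<^bsub>Gr\<^esub> n = \<sigma> [^]\<^bsub>Gr\<^esub> (m + n)"
    using Grp.nat_pow_mult[of \<sigma> m n] s by simp
  then show ?thesis by (metis o_apply)
qed

lemma pow_mult_app: "\<sigma> \<in> E \<Longrightarrow> \<sigma> [^]\<^bsub>Gr\<^esub> ((m::nat) * n) = (\<sigma> [^]\<^bsub>Gr\<^esub> m) [^]\<^bsub>Gr\<^esub> n"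
  using Grp.nat_pow_pow[of \<sigma> m n] by simp

lemma E_ext: assumes "\<sigma> \<in> E" "\<tau> \<in> E" "\<And>x. x \<in> F \<Longrightarrow> \<sigma> x = \<tau> x" shows "\<sigma> = \<tau>"
proof (rule ext)
  fix x show "\<sigma> x = \<tau> x"
  proof (cases "x \<in> F")
    case False then show ?thesis using e_out[OF assms(1) False] e_out[OF assms(2) False] by simp
  qed (use assms in simp)
qed

end

lemma poly_bound:
  fixes x :: complex
  assumes "degree P \<le> n"
  shows "poly P x = (\<Sum>i\<le>n. poly.coeff P i * x ^ i)"
proof -
  have "poly P x = (\<Sum>i\<le>degree P. poly.coeff P i * x ^ i)" by (rule poly_altdef)
  also have "\<dots> = (\<Sum>i\<le>n. poly.coeff P i * x ^ i)"
  proof (rule sum.mono_neutral_left)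
    show "\<forall>i\<in>{..n} - {..degree P}. poly.coeff P i * x ^ i = 0"
      by (auto simp: coeff_eq_0)
  qed (use assms in auto)
  finally show ?thesis .
qed

context sfield
begin

definition polyF where "polyF P \<longleftrightarrow> (\<forall>i. poly.coeff P i \<in> F)"

lemma polyF_add: "polyF P \<Longrightarrow> polyF Q \<Longrightarrow> polyF (P + Q)"
  unfolding polyF_def by (simp add: Fadd)

lemma polyF_mult: "polyF P \<Longrightarrow> polyF Q \<Longrightarrow> polyF (P * Q)"
  unfolding polyF_def coeff_mult by (intro allI Fsum Fmult) auto

lemma polyF_smult: "c \<in> F \<Longrightarrow> polyF P \<Longrightarrow> polyF (Polynomial.smult c P)"
  unfolding polyF_def by (simp add: Fmult)

lemma polyF_pCons: "a \<in> F \<Longrightarrow> polyF P \<Longrightarrow> polyF (pCons a P)"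
  unfolding polyF_def by (auto simp: coeff_pCons split: nat.splits)

lemma polyF_0: "polyF 0"
  unfolding polyF_def by simp

lemma polyF_prod: "(\<And>i. i \<in> A \<Longrightarrow> polyF (f i)) \<Longrightarrow> polyF (prod f A)"
proof (induction A rule: infinite_finite_induct)
  case (infinite A)
  then show ?case using polyF_pCons[OF F1 polyF_0] by (simp add: one_pCons)
next
  case empty
  then show ?case using polyF_pCons[OF F1 polyF_0] by (simp add: one_pCons)
next
  case (insert x F)
  then show ?case by (simp add: polyF_mult)
qed

lemma poly_in_F: "polyF P \<Longrightarrow> x \<in> F \<Longrightarrow> poly P x \<in> F"
  unfolding poly_altdef polyF_def by (intro Fsum Fmult Fpower) auto

lemma e_poly:
  assumes s: "\<sigma> \<in> E" and P: "polyF P" and x: "x \<in> F"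
  shows "\<sigma> (poly P x) = poly (map_poly \<sigma> P) (\<sigma> x)"
proof -
  have s0: "\<sigma> 0 = 0" using s by simp
  have "\<sigma> (poly P x) = (\<Sum>i\<le>degree P. \<sigma> (poly.coeff P i * x ^ i))"
    unfolding poly_altdef by (rule e_sum[OF s]) (use P x in \<open>auto simp: polyF_def intro!: Fmult Fpower\<close>)
  also have "\<dots> = (\<Sum>i\<le>degree P. poly.coeff (map_poly \<sigma> P) i * \<sigma> x ^ i)"
  proof (rule sum.cong)
    fix i assume "i \<in> {..degree P}"
    have ci: "poly.coeff P i \<in> F" using P by (simp add: polyF_def)
    have "\<sigma> (poly.coeff P i * x ^ i) = \<sigma> (poly.coeff P i) * \<sigma> (x ^ i)"
      using e_mult[OF s ci Fpower[OF x]] .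
    also have "\<dots> = poly.coeff (map_poly \<sigma> P) i * \<sigma> x ^ i"
      using e_power[OF s x] coeff_map_poly[of \<sigma>, OF s0] by simp
    finally show "\<sigma> (poly.coeff P i * x ^ i) = poly.coeff (map_poly \<sigma> P) i * \<sigma> x ^ i" .
  qed simp
  also have "\<dots> = poly (map_poly \<sigma> P) (\<sigma> x)"
    by (rule poly_bound[symmetric]) (rule map_poly_degree_leq)
  finally show ?thesis .
qed

lemma interp:
  "(\<forall>j\<le>n. t j \<in> F \<and> y j \<in> F) \<Longrightarrow> inj_on t {..n} \<Longrightarrow>
   \<exists>P. polyF P \<and> degree P \<le> n \<and> (\<forall>j\<le>n. poly P (t j) = y j)"
proof (induction n)
  case 0
  have "polyF [:y 0:]" using 0 polyF_pCons[OF _ polyF_0, of "y 0"] by simp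
  then show ?case by (intro exI[of _ "[:y 0:]"]) auto
next
  case (Suc n)
  have "\<forall>j\<le>n. t j \<in> F \<and> y j \<in> F" using Suc.prems(1) by simp
  moreover have "inj_on t {..n}" using Suc.prems(2) by (rule inj_on_subset) auto
  ultimately obtain P where P: "polyF P" "degree P \<le> n" "\<forall>j\<le>n. poly P (t j) = y j"
    using Suc.IH by blast
  have tF: "t j \<in> F" if "j \<le> Suc n" for j using Suc.prems(1) that by blast
  have yF: "y j \<in> F" if "j \<le> Suc n" for j using Suc.prems(1) that by blast
  define W where "W = (\<Prod>j\<le>n. [:- t j, 1:])"
  have WF: "polyF W" unfolding W_def
    by (rule polyF_prod) (use tF in \<open>auto intro!: polyF_pCons polyF_0 Fuminus\<close>)
  have dW: "degree W \<le> Suc n"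
  proof -
    have "degree W \<le> sum (degree \<circ> (\<lambda>j. [:- t j, 1:])) {..n}"
      unfolding W_def by (rule degree_prod_sum_le) simp
    also have "\<dots> = Suc n" by simp
    finally show ?thesis .
  qed
  have pW: "poly W x = (\<Prod>j\<le>n. x - t j)" for x
    unfolding W_def poly_prod by simp
  have W0: "poly W (t j) = 0" if "j \<le> n" for j
    unfolding pW using that by (intro prod_zero) auto
  have Wn: "poly W (t (Suc n)) \<noteq> 0"
  proof
    assume "poly W (t (Suc n)) = 0"
    then obtain j where j: "j \<le> n" "t (Suc n) - t j = 0" unfolding pW by auto
    then have "t (Suc n) = t j" by simp
    then have "Suc n = j" using Suc.prems(2) j(1) by (auto dest: inj_onD)
    then show False using j(1) by simp
  qed
  define c where "c = (y (Suc n) - poly P (t (Suc n))) / poly W (t (Suc n))"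
  have cF: "c \<in> F" unfolding c_def
    using yF[of "Suc n"] poly_in_F[OF P(1) tF[of "Suc n"]] poly_in_F[OF WF tF[of "Suc n"]]
    by (intro Fdivide Fdiff) auto
  define P' where "P' = P + Polynomial.smult c W"
  have "polyF P'" unfolding P'_def by (intro polyF_add polyF_smult P(1) WF cF)
  moreover have "degree P' \<le> Suc n" unfolding P'_def
    using P(2) dW degree_smult_le[of c W] by (intro degree_add_le) auto
  moreover have "\<forall>j\<le>Suc n. poly P' (t j) = y j"
  proof (intro allI impI)
    fix j assume j: "j \<le> Suc n"
    show "poly P' (t j) = y j"
    proof (cases "j = Suc n")
      case True
      then show ?thesis using Wn by (simp add: P'_def c_def)
    next
      case False
      then have "j \<le> n" using j by simp
      then show ?thesis using P(3) W0 by (simp add: P'_def)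
    qed
  qed
  ultimately show ?case by blast
qed

end

context galF
begin

context
  fixes g :: "complex \<Rightarrow> complex" and p :: nat and \<theta> :: complex
  assumes gE: "g \<in> E" and pp: "prime p" and gp: "g [^]\<^bsub>Gr\<^esub> p = idF"
    and \<theta>F: "\<theta> \<in> F" and g\<theta>: "g \<theta> \<noteq> \<theta>"
begin

abbreviation gpw :: "nat \<Rightarrow> complex \<Rightarrow> complex" where "gpw j \<equiv> g [^]\<^bsub>Gr\<^esub> j"

definition K where "K = {x \<in> F. g x = x}"
definition T where "T j = gpw j \<theta>"

lemma gpw_E: "gpw j \<in> E" using gE by simp

lemma gpw_0: "x \<in> F \<Longrightarrow> gpw 0 x = x"
  by (simp add: idF_def)

lemma K_fix: "x \<in> K \<Longrightarrow> gpw j x = x"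
proof (induction j)
  case 0 then show ?case by (simp add: K_def idF_def)
next
  case (Suc j)
  then show ?case using pow_Suc_app[OF gE, of j x] by (simp add: K_def)
qed

lemma gpw_pt: "x \<in> F \<Longrightarrow> gpw (p * t) x = x"
proof -
  assume x: "x \<in> F"
  have "gpw (p * t) = (gpw p) [^]\<^bsub>Gr\<^esub> t" using pow_mult_app[OF gE] .
  also have "\<dots> = idF" using gp Grp.nat_pow_one by simp
  finally show ?thesis using x by (simp add: idF_def)
qed

lemma p2: "p \<ge> 2" using pp prime_ge_2_nat by blast

lemma T_F: "T j \<in> F" unfolding T_def using gpw_E \<theta>F by blast

lemma T_Suc: "T (Suc j) = g (T j)" unfolding T_def using pow_Suc_app[OF gE] .

lemma fix_mult: "gpw m \<theta> = \<theta> \<Longrightarrow> gpw (m * t) \<theta> = \<theta>"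
proof (induction t)
  case 0 then show ?case using gpw_0 \<theta>F by simp
next
  case (Suc t)
  have "gpw (m * Suc t) \<theta> = gpw m (gpw (m * t) \<theta>)"
    using pow_add_app[OF gE, of m "m * t" \<theta>] by (simp add: add.commute)
  then show ?case using Suc by simp
qed

lemma T_inj: "inj_on T {..<p}"
proof (rule ccontr)
  assume "\<not> inj_on T {..<p}"
  then obtain i j where ij: "i < p" "j < p" "i \<noteq> j" "T i = T j" unfolding inj_on_def by auto
  have "\<exists>i j. i < j \<and> j < p \<and> T i = T j"
  proof (cases "i < j")
    case True then show ?thesis using ij by blast
  next
    case False then show ?thesis using ij by (intro exI[of _ j] exI[of _ i]) auto
  qed
  then obtain i j where ij: "i < j" "j < p" "T i = T j" by blast
  define m where "m = j - i"
  have m: "0 < m" "m < p" using ij by (auto simp: m_def)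
  have im: "i + m = j" using ij(1) by (simp add: m_def)
  have "gpw i (gpw m \<theta>) = gpw i \<theta>"
    using ij(3) pow_add_app[OF gE, of i m \<theta>] by (simp add: T_def im)
  moreover have "gpw m \<theta> \<in> F" using gpw_E \<theta>F by blast
  ultimately have fm: "gpw m \<theta> = \<theta>" using e_inj[OF gpw_E[of i]] \<theta>F by (auto dest: inj_onD)
  have "\<not> p dvd m" using m by (auto dest: dvd_imp_le)
  then have "coprime p m" by (rule prime_imp_coprime[OF pp])
  then have "coprime m p" by (simp add: coprime_commute)
  then have g1: "gcd m p = 1" by simp
  obtain k t where "m * k = p * t + gcd m p" using bezout_nat[of m p] m(1) by auto
  then have mk: "m * k = 1 + p * t" using g1 by simp
  have "\<theta> = gpw (m * k) \<theta>" using fix_mult[OF fm] by simp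
  also have "\<dots> = gpw 1 (gpw (p * t) \<theta>)"
    using pow_add_app[OF gE, of 1 "p * t" \<theta>] mk by simp
  also have "\<dots> = g \<theta>" using gpw_pt[OF \<theta>F] gE by simp
  finally show False using g\<theta> by simp
qed

lemma card_T: "card (T ` {..<p}) = p"
  using T_inj by (simp add: card_image)

lemma T_prev: "j < p \<Longrightarrow> \<exists>i<p. T j = g (T i) \<and> gpw j y = g (gpw i y)" if "y \<in> F"
proof -
  assume j: "j < p"
  show ?thesis
  proof (cases j)
    case 0
    have "T 0 = g (T (p - 1))" using T_Suc[of "p - 1"] p2 gpw_pt[OF \<theta>F, of 1]
      by (simp add: T_def gpw_0[OF \<theta>F] idF_def \<theta>F)
    moreover have "gpw 0 y = g (gpw (p - 1) y)"
      using pow_Suc_app[OF gE, of "p - 1" y] p2 gpw_pt[OF that, of 1] gpw_0[OF that] by simp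
    ultimately show ?thesis using 0 p2 by (intro exI[of _ "p - 1"]) auto
  next
    case (Suc i)
    then show ?thesis using j T_Suc[of i] pow_Suc_app[OF gE, of i y] by (intro exI[of _ i]) auto
  qed
qed

lemma K_sub: "K \<subseteq> F" by (auto simp: K_def)

lemma span_K:
  assumes y: "y \<in> F"
  shows "\<exists>k. (\<forall>i. k i \<in> K) \<and> y = (\<Sum>i<p. k i * \<theta> ^ i)"
proof -
  have "\<forall>j\<le>p - 1. T j \<in> F \<and> gpw j y \<in> F" using T_F gpw_E y by blast
  moreover have "inj_on T {..p - 1}" by (rule inj_on_subset[OF T_inj]) (use p2 in auto)
  ultimately obtain P where P: "polyF P" "degree P \<le> p - 1" "\<forall>j\<le>p - 1. poly P (T j) = gpw j y"
    using interp[of "p - 1" T "\<lambda>j. gpw j y"] by blast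
  define Q where "Q = map_poly g P"
  have "Q = P"
  proof (rule poly_eqI_degree[of "T ` {..<p}"])
    fix x assume "x \<in> T ` {..<p}"
    then obtain j where j: "j < p" "x = T j" by auto
    obtain i where i: "i < p" "T j = g (T i)" "gpw j y = g (gpw i y)" using T_prev[OF y j(1)] by blast
    have "poly Q x = poly Q (g (T i))" using i j by simp
    also have "\<dots> = g (poly P (T i))" unfolding Q_def by (rule e_poly[OF gE P(1) T_F, symmetric])
    also have "\<dots> = g (gpw i y)" using P(3) i(1) by simp
    also have "\<dots> = poly P x" using P(3) i(3) j by simp
    finally show "poly Q x = poly P x" .
  next
    show "degree Q < card (T ` {..<p})" unfolding card_T Q_def
      using map_poly_degree_leq[of g P] P(2) p2 by linarith
  next
    show "degree P < card (T ` {..<p})" unfolding card_T using P(2) p2 by linarith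
  qed
  then have cK: "poly.coeff P i \<in> K" for i
    using P(1) coeff_map_poly[of g P i] gE unfolding K_def polyF_def Q_def by (metis (mono_tags, lifting) e_0 mem_Collect_eq)
  have T0: "T 0 = \<theta>" using gpw_0[OF \<theta>F] by (simp add: T_def)
  have "y = gpw 0 y" using gpw_0[OF y] by simp
  also have "\<dots> = poly P (T 0)" using P(3) by simp
  also have "\<dots> = poly P \<theta>" using T0 by simp
  also have "\<dots> = (\<Sum>i\<le>p - 1. poly.coeff P i * \<theta> ^ i)" by (rule poly_bound[OF P(2)])
  also have "\<dots> = (\<Sum>i<p. poly.coeff P i * \<theta> ^ i)"
    using p2 by (intro sum.cong) auto
  finally show ?thesis using cK by blast
qed

lemma indep_K:
  assumes k: "\<And>i. i < p \<Longrightarrow> k i \<in> K" and s: "(\<Sum>i<p. k i * \<theta> ^ i) = 0"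
  shows "i < p \<Longrightarrow> k i = 0"
proof -
  assume i: "i < p"
  define P where "P = (\<Sum>i<p. Polynomial.monom (k i) i)"
  have cP: "poly.coeff P j = (if j < p then k j else 0)" for j
    unfolding P_def by (simp add: coeff_sum coeff_monom)
  have pP: "poly P x = (\<Sum>i<p. k i * x ^ i)" for x
    unfolding P_def by (simp add: poly_sum poly_monom)
  have "P = 0"
  proof (rule poly_eqI_degree[of "T ` {..<p}"])
    fix x assume "x \<in> T ` {..<p}"
    then obtain j where j: "x = T j" by auto
    have kF: "k i \<in> F" if "i < p" for i using k that K_sub by blast
    have "gpw j (\<Sum>i<p. k i * \<theta> ^ i) = (\<Sum>i<p. gpw j (k i * \<theta> ^ i))"
      using kF \<theta>F by (intro e_sum[OF gpw_E]) (auto intro: Fmult Fpower)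
    also have "\<dots> = (\<Sum>i<p. k i * T j ^ i)"
    proof (rule sum.cong)
      fix i assume "i \<in> {..<p}"
      then have "i < p" by simp
      then show "gpw j (k i * \<theta> ^ i) = k i * T j ^ i"
        using e_mult[OF gpw_E kF[OF \<open>i < p\<close>] Fpower[OF \<theta>F]] e_power[OF gpw_E \<theta>F] K_fix k
        by (simp add: T_def)
    qed simp
    finally have "(\<Sum>i<p. k i * T j ^ i) = 0" using s gpw_E by simp
    then show "poly P x = poly 0 x" using pP j by simp
  next
    have "degree P \<le> p - 1" by (rule degree_le) (auto simp: cP)
    then show "degree P < card (T ` {..<p})" unfolding card_T using p2 by linarith
  qed (use p2 card_T in auto)
  then show "k i = 0" using cP[of i] i by simp
qed

end

end

context galF
begin

lemma K_subspace:
  assumes gE: "g \<in> E"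
  shows "Qvs.subspace {x \<in> F. g x = x}"
proof (rule Qvs.subspaceI)
  show "0 \<in> {x \<in> F. g x = x}" using gE by simp
  show "x + y \<in> {x \<in> F. g x = x}" if "x \<in> {x \<in> F. g x = x}" "y \<in> {x \<in> F. g x = x}" for x y
    using that e_add[OF gE] Fadd by auto
  show "of_rat c * x \<in> {x \<in> F. g x = x}" if "x \<in> {x \<in> F. g x = x}" for c x
    using that e_mult[OF gE Fof_rat] e_of_rat[OF gE] Fmult[OF Fof_rat] by auto
qed

context
  fixes g :: "complex \<Rightarrow> complex" and p :: nat and \<theta> :: complex and d :: nat
  assumes gE: "g \<in> E" and pp: "prime p" and gp: "g [^]\<^bsub>Gr\<^esub> p = idF"
    and \<theta>F: "\<theta> \<in> F" and g\<theta>: "g \<theta> \<noteq> \<theta>" and dimF: "Qvs.dim F = 2 ^ d"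
begin

lemmas hyps = gE pp gp \<theta>F g\<theta>

lemma Kdef: "K g = {x \<in> F. g x = x}" by (rule K_def[OF hyps])

lemma dim_mult: "\<exists>c. Qvs.dim F = p * c"
proof -
  let ?K = "K g"
  have Ksub: "Qvs.subspace ?K" unfolding Kdef by (rule K_subspace[OF gE])
  have KF: "?K \<subseteq> F" by (auto simp: Kdef)
  obtain B where B: "B \<subseteq> F" "Qvs.independent B" "F \<subseteq> Qvs.span B" "card B = Qvs.dim F"
    by (rule Qvs.basis_exists)
  have finB: "finite B" using B(4) dimF by (metis card.infinite power_not_zero zero_neq_numeral)
  obtain BK where BK: "BK \<subseteq> ?K" "Qvs.independent BK" "?K \<subseteq> Qvs.span BK" "card BK = Qvs.dim ?K"
    by (rule Qvs.basis_exists)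
  have "finite BK"
    using Qvs.independent_span_bound[OF finB BK(2)] BK(1) KF B(3) by blast
  note finBK = this
  have BK0: "0 \<notin> BK" using BK(2) Qvs.dependent_zero by blast
  have \<theta>0: "\<theta> \<noteq> 0" using g\<theta> gE by auto
  have KBF: "b \<in> F" if "b \<in> BK" for b using that BK(1) KF by blast
  define h where "h = (\<lambda>(b::complex, i::nat). b * \<theta> ^ i)"
  define I where "I = BK \<times> {..<p}"
  define C where "C = h ` I"
  have finI: "finite I" using finBK by (simp add: I_def)
  have Ksum: "(\<Sum>b\<in>BK. of_rat (u b) * b) \<in> ?K" for u
  proof -
    have "(\<Sum>b\<in>BK. of_rat (u b) * b) \<in> Qvs.span BK"
      by (intro Qvs.span_sum Qvs.span_scale Qvs.span_base)
    moreover have "Qvs.span BK \<subseteq> ?K" using BK(1) Ksub by (rule Qvs.span_minimal)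
    ultimately show ?thesis by blast
  qed
  have injh: "inj_on h I"
  proof (rule inj_onI)
    fix x y assume x: "x \<in> I" and y: "y \<in> I" and hxy: "h x = h y"
    obtain b i where bi: "x = (b, i)" "b \<in> BK" "i < p" using x by (auto simp: I_def)
    obtain b' j where bj: "y = (b', j)" "b' \<in> BK" "j < p" using y by (auto simp: I_def)
    have eq: "b * \<theta> ^ i = b' * \<theta> ^ j" using hxy bi bj by (simp add: h_def)
    show "x = y"
    proof (cases "i = j")
      case True
      then have "b = b'" using eq \<theta>0 by simp
      then show ?thesis using bi bj True by simp
    next
      case False
      define k where "k = (\<lambda>l. if l = i then b else if l = j then - b' else 0)"
      have kK: "k l \<in> ?K" if "l < p" for l
      proof -
        have "b \<in> ?K" "b' \<in> ?K" using bi bj BK(1) by auto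
        moreover have "- b' \<in> ?K" using Qvs.subspace_neg[OF Ksub \<open>b' \<in> ?K\<close>] by simp
        moreover have "0 \<in> ?K" using Qvs.subspace_0[OF Ksub] by simp
        ultimately show ?thesis by (simp add: k_def)
      qed
      have "(\<Sum>l<p. k l * \<theta> ^ l) = (\<Sum>l<p. (if l = i then b * \<theta> ^ i else 0) + (if l = j then - b' * \<theta> ^ j else 0))"
        using False by (intro sum.cong) (auto simp: k_def)
      also have "\<dots> = b * \<theta> ^ i - b' * \<theta> ^ j"
        using bi bj by (simp add: sum.distrib)
      also have "\<dots> = 0" using eq by simp
      finally have "k i = 0" using indep_K[OF hyps, of k i] kK bi(3) by blast
      then have "b = 0" by (simp add: k_def)
      then show ?thesis using BK0 bi by simp
    qed
  qed
  have CF: "C \<subseteq> F" unfolding C_def I_def h_def using KBF \<theta>F by (auto intro!: Fmult Fpower)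
  have indC: "Qvs.independent C"
  proof (rule Qvs.independent_if_scalars_zero)
    show "finite C" using finI by (simp add: C_def)
  next
    fix f x assume sum0: "(\<Sum>x\<in>C. of_rat (f x) * x) = 0" and xC: "x \<in> C"
    have "(\<Sum>x\<in>C. of_rat (f x) * x) = (\<Sum>z\<in>I. of_rat (f (h z)) * h z)"
      unfolding C_def by (rule sum.reindex[OF injh, unfolded comp_def])
    also have "\<dots> = (\<Sum>(b,i)\<in>BK \<times> {..<p}. of_rat (f (h (b, i))) * (b * \<theta> ^ i))"
      unfolding I_def by (rule sum.cong) (auto simp: h_def split: prod.splits)
    also have "\<dots> = (\<Sum>b\<in>BK. \<Sum>i<p. of_rat (f (h (b, i))) * (b * \<theta> ^ i))"
      by (simp only: sum.cartesian_product)
    also have "\<dots> = (\<Sum>i<p. \<Sum>b\<in>BK. of_rat (f (h (b, i))) * (b * \<theta> ^ i))"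
      by (rule sum.swap)
    also have "\<dots> = (\<Sum>i<p. (\<Sum>b\<in>BK. of_rat (f (h (b, i))) * b) * \<theta> ^ i)"
      by (simp add: sum_distrib_right mult.assoc)
    finally have s0: "(\<Sum>i<p. (\<Sum>b\<in>BK. of_rat (f (h (b, i))) * b) * \<theta> ^ i) = 0" using sum0 by simp
    have k0: "(\<Sum>b\<in>BK. of_rat (f (h (b, i))) * b) = 0" if "i < p" for i
      using indep_K[OF hyps, of "\<lambda>i. \<Sum>b\<in>BK. of_rat (f (h (b, i))) * b" i, OF Ksum s0] that by blast
    obtain b i where bi: "x = h (b, i)" "b \<in> BK" "i < p" using xC by (auto simp: C_def I_def)
    show "f x = 0"
      using Qvs.independentD[OF BK(2) finBK order_refl k0[OF bi(3)] bi(2)] bi(1) by simp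
  qed
  have spanC: "F \<subseteq> Qvs.span C"
  proof
    fix y assume y: "y \<in> F"
    obtain k where k: "\<forall>i. k i \<in> ?K" "y = (\<Sum>i<p. k i * \<theta> ^ i)" using span_K[OF hyps y] by blast
    have "\<forall>i. \<exists>u. k i = (\<Sum>b\<in>BK. of_rat (u b) * b)"
    proof
      fix i
      have "k i \<in> Qvs.span BK" using k(1) BK(3) by blast
      then show "\<exists>u. k i = (\<Sum>b\<in>BK. of_rat (u b) * b)" unfolding Qvs.span_finite[OF finBK] by auto
    qed
    then obtain U where U: "\<And>i. k i = (\<Sum>b\<in>BK. of_rat (U i b) * b)" by metis
    have "y = (\<Sum>i<p. \<Sum>b\<in>BK. of_rat (U i b) * h (b, i))"
      unfolding k(2) U by (simp add: sum_distrib_right h_def mult.assoc)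
    also have "\<dots> \<in> Qvs.span C"
      by (intro Qvs.span_sum Qvs.span_scale Qvs.span_base) (auto simp: C_def I_def)
    finally show "y \<in> Qvs.span C" .
  qed
  have "Qvs.span C = Qvs.span F"
  proof
    show "Qvs.span C \<subseteq> Qvs.span F" using CF by (rule Qvs.span_mono)
    show "Qvs.span F \<subseteq> Qvs.span C" using spanC by (rule Qvs.span_minimal) simp
  qed
  then have "Qvs.dim F = card C" by (rule Qvs.dim_eq_card[OF _ indC])
  also have "\<dots> = card I" unfolding C_def using injh by (rule card_image)
  also have "\<dots> = p * card BK" by (simp add: I_def card_cartesian_product)
  finally show ?thesis by blast
qed

end

end

lemma pow2_char:
  fixes n :: nat
  shows "n > 0 \<Longrightarrow> (\<forall>p. prime p \<longrightarrow> p dvd n \<longrightarrow> p = 2) \<Longrightarrow> \<exists>k. n = 2 ^ k"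
proof (induction n rule: less_induct)
  case (less n)
  show ?case
  proof (cases "n = 1")
    case True then show ?thesis by (intro exI[of _ 0]) simp
  next
    case False
    then obtain p where p: "prime p" "p dvd n" using prime_factor_nat by blast
    then have "p = 2" using less.prems by blast
    then obtain m where m: "n = 2 * m" using p by (auto elim: dvdE)
    have "m < n" "m > 0" using m less.prems(1) by auto
    moreover have "\<forall>p. prime p \<longrightarrow> p dvd m \<longrightarrow> p = 2" using less.prems(2) m by auto
    ultimately obtain k where "m = 2 ^ k" using less.IH by blast
    then show ?thesis using m by (intro exI[of _ "Suc k"]) simp
  qed
qed

context galF
begin

lemma two_group:
  assumes finE: "finite E" and dimF: "Qvs.dim F = 2 ^ d"
  shows "\<exists>k. card E = 2 ^ k"
proof (rule pow2_char)
  show "card E > 0" using finE idF_in_E by (metis card_gt_0_iff empty_iff)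
  show "\<forall>p. prime p \<longrightarrow> p dvd card E \<longrightarrow> p = 2"
  proof (intro allI impI)
    fix p assume pp: "prime p" and pd: "p dvd card E"
    have ord: "order Gr = p ^ 1 * (card E div p)" using pd by (simp add: order_def)
    have "\<exists>H. subgroup H Gr \<and> card H = p ^ 1"
      by (rule sylow_thm[OF pp group_Gr ord]) (simp add: finE)
    then obtain H where H: "subgroup H Gr" "card H = p ^ 1" by blast
    have HE: "H \<subseteq> E" using subgroup.subset[OF H(1)] by simp
    have "card H \<ge> 2" using H(2) pp prime_ge_2_nat by simp
    then have "\<not> H \<subseteq> {idF}" using card_mono[of "{idF}" H] by (metis card_1_singleton_iff card_mono finite.emptyI finite_insert insert_absorb2 le_antisym not_less_eq_eq numeral_2_eq_2 one_le_numeral order_refl singleton_insert_inj_eq subset_singletonD card.empty one_le_numeral)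
    then obtain g where gH: "g \<in> H" and gne: "g \<noteq> idF" by blast
    have gE: "g \<in> E" using gH HE by blast
    interpret Hg: group "Gr\<lparr>carrier := H\<rparr>" by (rule Grp.subgroup_imp_group[OF H(1)])
    have "g [^]\<^bsub>Gr\<lparr>carrier := H\<rparr>\<^esub> order (Gr\<lparr>carrier := H\<rparr>) = \<one>\<^bsub>Gr\<lparr>carrier := H\<rparr>\<^esub>"
      by (rule Hg.pow_order_eq_1) (simp add: gH)
    then have gp: "g [^]\<^bsub>Gr\<^esub> p = idF"
      using H(2) Grp.nat_pow_consistent[of g p H] by (simp add: order_def)
    obtain \<theta> where \<theta>: "\<theta> \<in> F" "g \<theta> \<noteq> \<theta>"
    proof -
      have "\<exists>\<theta>\<in>F. g \<theta> \<noteq> \<theta>"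
      proof (rule ccontr)
        assume "\<not> (\<exists>\<theta>\<in>F. g \<theta> \<noteq> \<theta>)"
        then have "g = idF" using E_ext[OF gE idF_in_E] by (simp add: idF_def)
        then show False using gne by simp
      qed
      then show ?thesis using that by blast
    qed
    obtain c where "Qvs.dim F = p * c" using dim_mult[OF gE pp gp \<theta> dimF] by blast
    then have "p dvd 2 ^ d" using dimF by simp
    then have "p dvd 2" using pp prime_dvd_power by blast
    then show "p = 2" using pp by (metis dvd_imp_le prime_ge_2_nat le_antisym zero_less_numeral)
  qed
qed

end

lemma odd_dvd_pow2: "odd (d::nat) \<Longrightarrow> d dvd 2 ^ k \<Longrightarrow> d = 1"
proof (induction k)
  case 0 then show ?case by simp
next
  case (Suc k)
  have "coprime d 2" using Suc.prems(1) by simp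
  then have "d dvd 2 ^ k" using Suc.prems(2) coprime_dvd_mult_right_iff[of d 2 "2 ^ k"] by simp
  then show ?case using Suc by blast
qed

lemma (in group_action) fixed_points_mod2:
  assumes finE: "finite E" and ord: "order G = 2 ^ k" and ev: "even (card E)"
  shows "even (card {x \<in> E. \<forall>g\<in>carrier G. \<phi> g x = x})"
proof -
  define Fx where "Fx = {x \<in> E. \<forall>g\<in>carrier G. \<phi> g x = x}"
  define Ob where "Ob = orbits G E \<phi>"
  have finO: "finite Ob" unfolding Ob_def orbits_def using finE by simp
  have orbE: "orbit G \<phi> x \<subseteq> E" if "x \<in> E" for x
    unfolding orbit_def using element_image that by blast
  have sumO: "(\<Sum>orb\<in>Ob. card orb) = card E"
    using disjoint_sum[OF finE, of "\<lambda>_. 1::nat"] by (simp add: Ob_def flip: card_eq_sum)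
  have sing: "orbit G \<phi> x = {x} \<longleftrightarrow> x \<in> Fx" if x: "x \<in> E" for x
  proof
    assume "orbit G \<phi> x = {x}"
    then show "x \<in> Fx" using x unfolding Fx_def orbit_def by blast
  next
    assume "x \<in> Fx"
    then show "orbit G \<phi> x = {x}" using orbit_refl[OF x] unfolding Fx_def orbit_def by auto
  qed
  have evorb: "even (card (orbit G \<phi> x))" if x: "x \<in> E" "x \<notin> Fx" for x
  proof -
    have "card (orbit G \<phi> x) dvd 2 ^ k"
      using orbit_stabilizer_theorem[OF x(1)] ord by (metis dvd_triv_left)
    moreover have "card (orbit G \<phi> x) \<noteq> 1"
    proof
      assume "card (orbit G \<phi> x) = 1"
      then obtain y where "orbit G \<phi> x = {y}" by (auto simp: card_Suc_eq)
      then have "orbit G \<phi> x = {x}" using orbit_refl[OF x(1)] by auto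
      then show False using sing[OF x(1)] x(2) by simp
    qed
    ultimately show ?thesis using odd_dvd_pow2 by blast
  qed
  define O1 where "O1 = {orb \<in> Ob. card orb = 1}"
  define O2 where "O2 = {orb \<in> Ob. card orb \<noteq> 1}"
  have "Ob = O1 \<union> O2" "O1 \<inter> O2 = {}" by (auto simp: O1_def O2_def)
  then have "(\<Sum>orb\<in>Ob. card orb) = (\<Sum>orb\<in>O1. card orb) + (\<Sum>orb\<in>O2. card orb)"
    using finO by (simp add: sum.union_disjoint)
  moreover have "(\<Sum>orb\<in>O1. card orb) = card O1" by (simp add: O1_def)
  moreover have "even (\<Sum>orb\<in>O2. card orb)"
  proof (rule dvd_sum)
    fix orb assume "orb \<in> O2"
    then obtain x where x: "x \<in> E" "orb = orbit G \<phi> x" "card orb \<noteq> 1"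
      by (auto simp: O2_def Ob_def orbits_def)
    have "x \<notin> Fx" using sing[OF x(1)] x by auto
    then show "even (card orb)" using evorb[OF x(1)] x(2) by simp
  qed
  moreover have "O1 = (\<lambda>x. {x}) ` Fx"
  proof
    show "O1 \<subseteq> (\<lambda>x. {x}) ` Fx"
    proof
      fix orb assume "orb \<in> O1"
      then obtain x where x: "x \<in> E" "orb = orbit G \<phi> x" "card orb = 1"
        by (auto simp: O1_def Ob_def orbits_def)
      then obtain y where "orbit G \<phi> x = {y}" by (auto simp: card_Suc_eq)
      then have "orbit G \<phi> x = {x}" using orbit_refl[OF x(1)] by auto
      then show "orb \<in> (\<lambda>x. {x}) ` Fx" using sing[OF x(1)] x(2) by auto
    qed
    show "(\<lambda>x. {x}) ` Fx \<subseteq> O1"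
    proof
      fix orb assume "orb \<in> (\<lambda>x. {x}) ` Fx"
      then obtain x where x: "x \<in> Fx" "orb = {x}" by auto
      have xE: "x \<in> E" using x(1) by (simp add: Fx_def)
      then have "orbit G \<phi> x = {x}" using sing x(1) by blast
      then show "orb \<in> O1" using x xE by (auto simp: O1_def Ob_def orbits_def)
    qed
  qed
  then have "card O1 = card Fx" by (simp add: card_image)
  ultimately show ?thesis using sumO ev Fx_def by (metis dvd_add_left_iff)
qed

lemma prod_pm1: "(\<And>i. i \<in> A \<Longrightarrow> f i = 1 \<or> f i = (-1::real)) \<Longrightarrow> prod f A = 1 \<or> prod f A = -1"
proof (induction A rule: infinite_finite_induct)
  case (insert x A)
  then have "f x = 1 \<or> f x = -1" "prod f A = 1 \<or> prod f A = -1" by auto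
  then have "f x * prod f A = 1 \<or> f x * prod f A = -1" by auto
  then show ?case using insert(1,2) by simp
qed auto

context galF
begin

lemma left_bij: assumes g: "g \<in> E" shows "bij_betw (\<lambda>\<sigma>. g \<circ> \<sigma>) E E"
proof (rule bij_betwI[where g = "\<lambda>\<sigma>. inv\<^bsub>Gr\<^esub> g \<circ> \<sigma>"])
  have ig: "inv\<^bsub>Gr\<^esub> g \<in> E" using Grp.inv_closed[of g] g by simp
  have l: "inv\<^bsub>Gr\<^esub> g \<circ> g = idF" using Grp.l_inv[of g] g by simp
  have r: "g \<circ> inv\<^bsub>Gr\<^esub> g = idF" using Grp.r_inv[of g] g by simp
  show "(\<circ>) g \<in> E \<rightarrow> E" using g by auto
  show "(\<circ>) (inv\<^bsub>Gr\<^esub> g) \<in> E \<rightarrow> E" using ig by auto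
  show "inv\<^bsub>Gr\<^esub> g \<circ> (g \<circ> x) = x" if "x \<in> E" for x
    using l that by (simp add: comp_assoc[symmetric])
  show "g \<circ> (inv\<^bsub>Gr\<^esub> g \<circ> y) = y" if "y \<in> E" for y
    using r that by (simp add: comp_assoc[symmetric])
qed

lemma right_bij: assumes g: "g \<in> E" shows "bij_betw (\<lambda>\<sigma>. \<sigma> \<circ> g) E E"
proof (rule bij_betwI[where g = "\<lambda>\<sigma>. \<sigma> \<circ> inv\<^bsub>Gr\<^esub> g"])
  have ig: "inv\<^bsub>Gr\<^esub> g \<in> E" using Grp.inv_closed[of g] g by simp
  have l: "inv\<^bsub>Gr\<^esub> g \<circ> g = idF" using Grp.l_inv[of g] g by simp
  have r: "g \<circ> inv\<^bsub>Gr\<^esub> g = idF" using Grp.r_inv[of g] g by simp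
  show "(\<lambda>\<sigma>. \<sigma> \<circ> g) \<in> E \<rightarrow> E" using g by auto
  show "(\<lambda>\<sigma>. \<sigma> \<circ> inv\<^bsub>Gr\<^esub> g) \<in> E \<rightarrow> E" using ig by auto
  show "x \<circ> g \<circ> inv\<^bsub>Gr\<^esub> g = x" if "x \<in> E" for x
    using r that by (simp add: comp_assoc)
  show "y \<circ> inv\<^bsub>Gr\<^esub> g \<circ> g = y" if "y \<in> E" for y
    using l that by (simp add: comp_assoc)
qed

context
  fixes w :: "(complex \<Rightarrow> complex) \<Rightarrow> real" and k :: nat
  assumes finE: "finite E" and cardE: "card E = 2 ^ k"
    and w1: "\<And>\<tau>. \<tau> \<in> E \<Longrightarrow> w \<tau> = 1 \<or> w \<tau> = -1"
    and wprod: "(\<Prod>\<tau>\<in>E. w \<tau>) = -1"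
begin

definition L where "L X \<tau> = (\<Prod>\<sigma>\<in>X. w (\<tau> \<circ> \<sigma>))"
definition tr where "tr g Z = (\<lambda>\<sigma>. g \<circ> \<sigma>) ` Z"
definition sd where "sd X Y = (X - Y) \<union> (Y - X)"
definition N where "N = {Z \<in> Pow E. \<forall>\<tau>\<in>E. L Z \<tau> = 1}"

lemma w2: "\<tau> \<in> E \<Longrightarrow> w \<tau> * w \<tau> = 1" using w1 by force

lemma prod_trans: "\<tau> \<in> E \<Longrightarrow> (\<Prod>\<sigma>\<in>E. w (\<tau> \<circ> \<sigma>)) = -1"
  using prod.reindex_bij_betw[OF left_bij, of \<tau> w] wprod by simp

lemma prod_trans_r: "\<sigma> \<in> E \<Longrightarrow> (\<Prod>\<tau>\<in>E. w (\<tau> \<circ> \<sigma>)) = -1"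
  using prod.reindex_bij_betw[OF right_bij, of \<sigma> w] wprod by simp

lemma L_sd: assumes "X \<subseteq> E" "Y \<subseteq> E" "\<tau> \<in> E" shows "L (sd X Y) \<tau> = L X \<tau> * L Y \<tau>"
proof -
  have fX: "finite X" "finite Y" using assms finE finite_subset by auto
  let ?f = "\<lambda>\<sigma>. w (\<tau> \<circ> \<sigma>)"
  have eX: "X = (X - Y) \<union> (X \<inter> Y)" and eY: "Y = (Y - X) \<union> (X \<inter> Y)" by blast+
  have a: "L X \<tau> = prod ?f (X - Y) * prod ?f (X \<inter> Y)"
    unfolding L_def using fX by (subst eX) (rule prod.union_disjoint, auto)
  have b: "L Y \<tau> = prod ?f (Y - X) * prod ?f (X \<inter> Y)"
    unfolding L_def using fX by (subst eY) (rule prod.union_disjoint, auto)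
  have c: "L (sd X Y) \<tau> = prod ?f (X - Y) * prod ?f (Y - X)"
    unfolding L_def sd_def using fX by (intro prod.union_disjoint) auto
  have d: "prod ?f (X \<inter> Y) * prod ?f (X \<inter> Y) = 1"
  proof -
    have "prod ?f (X \<inter> Y) * prod ?f (X \<inter> Y) = (\<Prod>\<sigma>\<in>X \<inter> Y. ?f \<sigma> * ?f \<sigma>)"
      by (simp add: prod.distrib)
    also have "\<dots> = 1"
    proof (rule prod.neutral, rule ballI)
      fix \<sigma> assume "\<sigma> \<in> X \<inter> Y"
      then have "\<tau> \<circ> \<sigma> \<in> E" using assms comp_E by blast
      then show "?f \<sigma> * ?f \<sigma> = 1" by (rule w2)
    qed
    finally show ?thesis .
  qed
  have "L X \<tau> * L Y \<tau> = (prod ?f (X - Y) * prod ?f (Y - X)) * (prod ?f (X \<inter> Y) * prod ?f (X \<inter> Y))"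
    unfolding a b by (simp only: ac_simps)
  also have "\<dots> = L (sd X Y) \<tau>" unfolding c d by simp
  finally show ?thesis by simp
qed

lemma L_tr: assumes g: "g \<in> E" and Z: "Z \<subseteq> E" shows "L (tr g Z) \<tau> = L Z (\<tau> \<circ> g)"
proof -
  have "inj_on (\<lambda>\<sigma>. g \<circ> \<sigma>) Z" using inj_on_subset[OF bij_betw_imp_inj_on[OF left_bij[OF g]] Z] .
  then show ?thesis unfolding L_def tr_def by (simp add: prod.reindex comp_assoc)
qed

lemma tr_sub: "g \<in> E \<Longrightarrow> Z \<subseteq> E \<Longrightarrow> tr g Z \<subseteq> E"
  unfolding tr_def by auto

lemma tr_N: assumes g: "g \<in> E" and Z: "Z \<in> N" shows "tr g Z \<in> N"
  using Z tr_sub[OF g] L_tr[OF g] g unfolding N_def by auto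

lemma tr_comp: "tr (g \<circ> h) Z = tr g (tr h Z)"
  unfolding tr_def by (auto simp: comp_assoc image_image)

lemma tr_bij: assumes g: "g \<in> E" shows "bij_betw (tr g) N N"
proof (rule bij_betwI[where g = "tr (inv\<^bsub>Gr\<^esub> g)"])
  have ig: "inv\<^bsub>Gr\<^esub> g \<in> E" using Grp.inv_closed[of g] g by simp
  have l: "inv\<^bsub>Gr\<^esub> g \<circ> g = idF" using Grp.l_inv[of g] g by simp
  have r: "g \<circ> inv\<^bsub>Gr\<^esub> g = idF" using Grp.r_inv[of g] g by simp
  have trid: "tr idF Z = Z" if "Z \<subseteq> E" for Z
    unfolding tr_def using that idF_comp by (auto simp: image_iff) (metis idF_comp subsetD)
  show "tr g \<in> N \<rightarrow> N" using tr_N[OF g] by blast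
  show "tr (inv\<^bsub>Gr\<^esub> g) \<in> N \<rightarrow> N" using tr_N[OF ig] by blast
  show "tr (inv\<^bsub>Gr\<^esub> g) (tr g x) = x" if "x \<in> N" for x
    using that trid l by (auto simp: N_def simp flip: tr_comp)
  show "tr g (tr (inv\<^bsub>Gr\<^esub> g) y) = y" if "y \<in> N" for y
    using that trid r by (auto simp: N_def simp flip: tr_comp)
qed

lemma finN: "finite N" unfolding N_def using finE by simp

lemma empty_N: "{} \<in> N" by (simp add: N_def L_def)

lemma sd_N: "X \<in> N \<Longrightarrow> Y \<in> N \<Longrightarrow> sd X Y \<in> N"
  unfolding N_def using L_sd by (auto simp: sd_def)

lemma N_trivial: "Z \<in> N \<Longrightarrow> Z = {}"
proof (rule ccontr)
  assume Z0: "Z \<in> N" "Z \<noteq> {}"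
  then obtain a0 where a0: "a0 \<in> Z" by blast
  define A where "A = {X \<in> N. a0 \<notin> X}"
  define B where "B = {X \<in> N. a0 \<in> X}"
  have "bij_betw (\<lambda>X. sd X Z) A B"
  proof (rule bij_betwI[where g = "\<lambda>X. sd X Z"])
    show "(\<lambda>X. sd X Z) \<in> A \<rightarrow> B" using sd_N Z0 a0 by (auto simp: A_def B_def sd_def)
    show "(\<lambda>X. sd X Z) \<in> B \<rightarrow> A" using sd_N Z0 a0 by (auto simp: A_def B_def sd_def)
    show "sd (sd x Z) Z = x" for x by (auto simp: sd_def)
    show "sd (sd y Z) Z = y" for y by (auto simp: sd_def)
  qed
  then have cAB: "card A = card B" by (rule bij_betw_same_card)
  have "N = A \<union> B" "A \<inter> B = {}" by (auto simp: A_def B_def)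
  then have "card N = card A + card B" using finN by (metis card_Un_disjoint finite_Un)
  then have evN: "even (card N)" using cAB by simp
  define \<phi> :: "(complex \<Rightarrow> complex) \<Rightarrow> (complex \<Rightarrow> complex) set \<Rightarrow> (complex \<Rightarrow> complex) set"
    where "\<phi> = (\<lambda>g. \<lambda>X\<in>N. tr g X)"
  have act: "group_action Gr N \<phi>"
    unfolding group_action_def group_hom_def group_hom_axioms_def
  proof (intro conjI)
    show "group Gr" by (rule group_Gr)
    show "group (BijGroup N)" by (rule group_BijGroup)
    show "\<phi> \<in> hom Gr (BijGroup N)"
    proof (rule homI)
      fix g assume "g \<in> carrier Gr"
      then have g: "g \<in> E" by simp
      show "\<phi> g \<in> carrier (BijGroup N)"
        unfolding BijGroup_def Bij_def \<phi>_def using tr_bij[OF g]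
        by (simp add: bij_betw_def inj_on_def image_def)
    next
      fix g h assume "g \<in> carrier Gr" "h \<in> carrier Gr"
      then have g: "g \<in> E" and h: "h \<in> E" by auto
      have bg: "\<phi> g \<in> Bij N" "\<phi> h \<in> Bij N"
        unfolding Bij_def \<phi>_def using tr_bij g h by (auto simp: bij_betw_def inj_on_def)
      show "\<phi> (g \<otimes>\<^bsub>Gr\<^esub> h) = \<phi> g \<otimes>\<^bsub>BijGroup N\<^esub> \<phi> h"
        using bg tr_N[OF h] unfolding BijGroup_def \<phi>_def compose_def
        by (intro ext) (auto simp: tr_comp)
    qed
  qed
  interpret A: group_action Gr N \<phi> by (rule act)
  have "order Gr = 2 ^ k" using cardE by (simp add: order_def)
  then have evF: "even (card {X \<in> N. \<forall>g\<in>carrier Gr. \<phi> g X = X})"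
    using A.fixed_points_mod2[OF finN _ evN] by blast
  define Fx where "Fx = {X \<in> N. \<forall>g\<in>carrier Gr. \<phi> g X = X}"
  have eFx: "{} \<in> Fx" using empty_N by (simp add: Fx_def \<phi>_def tr_def)
  have "\<exists>Z1\<in>Fx. Z1 \<noteq> {}"
  proof (rule ccontr)
    assume "\<not> (\<exists>Z1\<in>Fx. Z1 \<noteq> {})"
    then have "Fx = {{}}" using eFx by blast
    then show False using evF unfolding Fx_def by simp
  qed
  then obtain Z1 where Z1: "Z1 \<in> Fx" "Z1 \<noteq> {}" by blast
  have Z1N: "Z1 \<in> N" using Z1 by (simp add: Fx_def)
  have Z1E: "Z1 \<subseteq> E" using Z1N by (simp add: N_def)
  obtain s0 where s0: "s0 \<in> Z1" using Z1 by blast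
  have "E \<subseteq> Z1"
  proof
    fix \<tau> assume t: "\<tau> \<in> E"
    have s0E: "s0 \<in> E" using s0 Z1E by blast
    define g where "g = \<tau> \<circ> inv\<^bsub>Gr\<^esub> s0"
    have gE: "g \<in> E" unfolding g_def using t Grp.inv_closed[of s0] s0E by (simp add: comp_E)
    have "g \<circ> s0 = \<tau>" unfolding g_def using Grp.l_inv[of s0] s0E t by (simp add: comp_assoc)
    moreover have "tr g Z1 = Z1" using Z1(1) gE by (simp add: Fx_def \<phi>_def Z1N)
    ultimately show "\<tau> \<in> Z1" using s0 unfolding tr_def by blast
  qed
  then have "Z1 = E" using Z1E by blast
  then have "L E idF = 1" using Z1N idF_in_E by (simp add: N_def)
  moreover have "L E idF = -1" unfolding L_def using prod_trans[OF idF_in_E] .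
  ultimately show False by simp
qed

lemma L_pm1: "X \<subseteq> E \<Longrightarrow> \<tau> \<in> E \<Longrightarrow> L X \<tau> = 1 \<or> L X \<tau> = -1"
  unfolding L_def by (rule prod_pm1) (use w1 comp_E in blast)

lemma sign_surj:
  assumes s1: "\<forall>\<tau>\<in>E. s \<tau> = 1 \<or> s \<tau> = -1" and sprod: "(\<Prod>\<tau>\<in>E. s \<tau>) = 1"
  shows "\<exists>X\<subseteq>E. even (card X) \<and> (\<forall>\<tau>\<in>E. L X \<tau> = s \<tau>)"
proof -
  define S where "S = {f. (\<forall>\<tau>\<in>E. f \<tau> = 1 \<or> f \<tau> = (-1::real)) \<and> (\<forall>\<tau>. \<tau> \<notin> E \<longrightarrow> f \<tau> = 1)}"
  define Lr where "Lr X = (\<lambda>\<tau>. if \<tau> \<in> E then L X \<tau> else 1)" for X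
  have bS: "bij_betw (\<lambda>M. (\<lambda>\<tau>. if \<tau> \<in> M then -1 else (1::real))) (Pow E) S"
  proof (rule bij_betwI[where g = "\<lambda>f. {\<tau> \<in> E. f \<tau> = -1}"])
    show "(\<lambda>M \<tau>. if \<tau> \<in> M then - 1 else (1::real)) \<in> Pow E \<rightarrow> S" by (auto simp: S_def)
    show "(\<lambda>f. {\<tau> \<in> E. f \<tau> = - 1}) \<in> S \<rightarrow> Pow E" by auto
    show "{\<tau> \<in> E. (if \<tau> \<in> x then - 1 else (1::real)) = - 1} = x" if "x \<in> Pow E" for x
      using that by auto
    show "(\<lambda>\<tau>. if \<tau> \<in> {\<tau> \<in> E. y \<tau> = - 1} then - 1 else 1) = y" if "y \<in> S" for y
      using that by (auto simp: S_def fun_eq_iff)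
  qed
  have finS: "finite S" using bij_betw_finite[OF bS] finE by simp
  have cS: "card S = card (Pow E)" using bij_betw_same_card[OF bS] by simp
  have LrS: "Lr ` Pow E \<subseteq> S"
  proof (rule subsetI)
    fix f assume "f \<in> Lr ` Pow E"
    then obtain X where X: "X \<subseteq> E" "f = Lr X" by auto
    have "\<forall>\<tau>\<in>E. L X \<tau> = 1 \<or> L X \<tau> = -1" using L_pm1[OF X(1)] by blast
    then show "f \<in> S" using X by (simp add: S_def Lr_def)
  qed
  have injLr: "inj_on Lr (Pow E)"
  proof (rule inj_onI)
    fix X Y assume X: "X \<in> Pow E" and Y: "Y \<in> Pow E" and eq: "Lr X = Lr Y"
    have "L X \<tau> = L Y \<tau>" if "\<tau> \<in> E" for \<tau> using eq that by (metis Lr_def)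
    then have "sd X Y \<in> N"
      using X Y L_sd L_pm1 unfolding N_def sd_def
      by (auto simp: sd_def) (metis L_sd mult_minus_left mult_1 minus_minus PowD)
    then have "sd X Y = {}" by (rule N_trivial)
    then show "X = Y" by (auto simp: sd_def)
  qed
  have "card (Lr ` Pow E) = card S" using card_image[OF injLr] cS by simp
  then have LrS_eq: "Lr ` Pow E = S" using card_subset_eq[OF finS LrS] by simp
  define s' where "s' = (\<lambda>\<tau>. if \<tau> \<in> E then s \<tau> else 1)"
  have "s' \<in> S" using s1 by (auto simp: S_def s'_def)
  then obtain X where X: "X \<subseteq> E" "Lr X = s'" using LrS_eq by (metis PowD imageE)
  have Ls: "\<forall>\<tau>\<in>E. L X \<tau> = s \<tau>" using X(2) by (metis Lr_def s'_def)
  have finX: "finite X" using X(1) finE finite_subset by blast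
  have "(\<Prod>\<tau>\<in>E. L X \<tau>) = (\<Prod>\<sigma>\<in>X. \<Prod>\<tau>\<in>E. w (\<tau> \<circ> \<sigma>))"
    unfolding L_def by (rule prod.swap)
  also have "\<dots> = (\<Prod>\<sigma>\<in>X. -1)" using prod_trans_r X(1) by (intro prod.cong) auto
  also have "\<dots> = (-1) ^ card X" by simp
  finally have "(-1::real) ^ card X = 1" using Ls sprod by simp
  then have "even (card X)" by (simp add: minus_one_power_iff split: if_splits)
  then show ?thesis using X(1) Ls by blast
qed

end

end

lemma sgn_prod_real: "sgn (prod f A) = (\<Prod>i\<in>A. sgn (f i :: real))"
  by (induction A rule: infinite_finite_induct) (auto simp: sgn_mult)

context galF
begin

declare e_add[simp del] e_mult[simp del] e_1[simp del] e_0[simp del] e_uminus[simp del]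
  e_diff[simp del] e_inverse[simp del] e_divide[simp del] e_sum[simp del] e_prod[simp del]
  e_power[simp del] e_of_nat[simp del] e_of_int[simp del] e_of_rat[simp del]

lemma roi_iff: "x \<in> ring_of_integers F \<longleftrightarrow> x \<in> F \<and> algebraic_int x"
  by (simp add: ring_of_integers_def)

lemma units_iff: "x \<in> units_of_integers F \<longleftrightarrow> x \<in> ring_of_integers F \<and> (\<exists>v\<in>ring_of_integers F. x * v = 1)"
  by (simp add: units_of_integers_def)

lemma units_mult:
  assumes u: "u \<in> units_of_integers F" and v: "v \<in> units_of_integers F"
  shows "u * v \<in> units_of_integers F"
proof -
  obtain u' where u': "u' \<in> ring_of_integers F" "u * u' = 1" using u units_iff by blast
  obtain v' where v': "v' \<in> ring_of_integers F" "v * v' = 1" using v units_iff by blast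
  have uO: "u \<in> F" "algebraic_int u" using u units_iff roi_iff by blast+
  have vO: "v \<in> F" "algebraic_int v" using v units_iff roi_iff by blast+
  have u'O: "u' \<in> F" "algebraic_int u'" using u' roi_iff by blast+
  have v'O: "v' \<in> F" "algebraic_int v'" using v' roi_iff by blast+
  have "u * v \<in> ring_of_integers F"
    unfolding roi_iff using Fmult[OF uO(1) vO(1)] algebraic_int_mult[OF uO(2) vO(2)] by blast
  moreover have "u' * v' \<in> ring_of_integers F"
    unfolding roi_iff using Fmult[OF u'O(1) v'O(1)] algebraic_int_mult[OF u'O(2) v'O(2)] by blast
  moreover have "(u * v) * (u' * v') = 1"
  proof -
    have "(u * v) * (u' * v') = (u * u') * (v * v')" by (simp only: ac_simps)
    then show ?thesis using u'(2) v'(2) by simp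
  qed
  ultimately show ?thesis unfolding units_iff by blast
qed

lemma units_one: "1 \<in> units_of_integers F"
proof -
  have o: "1 \<in> ring_of_integers F" unfolding roi_iff by simp
  show ?thesis unfolding units_iff using o by force
qed

lemma units_prod: "(\<And>i. i \<in> A \<Longrightarrow> f i \<in> units_of_integers F) \<Longrightarrow> prod f A \<in> units_of_integers F"
proof (induction A rule: infinite_finite_induct)
  case (infinite A) then show ?case using units_one by simp
next
  case empty then show ?case using units_one by simp
next
  case (insert x A)
  have "f x \<in> units_of_integers F" "prod f A \<in> units_of_integers F" using insert by blast+
  then have "f x * prod f A \<in> units_of_integers F" by (rule units_mult)
  then show ?case using insert(1,2) by simp
qed

lemma unit_quot:
  assumes \<alpha>F: "\<alpha> \<in> F" and \<alpha>0: "\<alpha> \<noteq> 0"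
    and inv: "\<forall>\<sigma>\<in>E. \<sigma> ` principal_ideal F \<alpha> = principal_ideal F \<alpha>"
    and s: "\<sigma> \<in> E"
  shows "\<sigma> \<alpha> / \<alpha> \<in> units_of_integers F"
proof -
  have oneO: "1 \<in> ring_of_integers F" unfolding roi_iff by simp
  have aPI: "\<alpha> \<in> principal_ideal F \<alpha>" unfolding principal_ideal_def using oneO by force
  then have "\<sigma> \<alpha> \<in> principal_ideal F \<alpha>" using inv s by blast
  then obtain x where x: "x \<in> ring_of_integers F" "\<sigma> \<alpha> = \<alpha> * x" unfolding principal_ideal_def by blast
  have "\<alpha> \<in> \<sigma> ` principal_ideal F \<alpha>" using aPI inv s by blast
  then obtain z where z: "z \<in> principal_ideal F \<alpha>" "\<alpha> = \<sigma> z" by (rule imageE)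
  from z(1) obtain y where y1: "y \<in> ring_of_integers F" "z = \<alpha> * y" unfolding principal_ideal_def by blast
  have y: "y \<in> ring_of_integers F" "\<alpha> = \<sigma> (\<alpha> * y)" using y1 z(2) by (simp_all only:)
  have yF: "y \<in> F" "algebraic_int y" using y(1) roi_iff by blast+
  have sy: "\<sigma> y \<in> ring_of_integers F"
    unfolding roi_iff using e_in[OF s yF(1)] e_algebraic_int[OF s yF] by blast
  have e1: "\<alpha> = \<sigma> \<alpha> * \<sigma> y" using y(2) e_mult[OF s \<alpha>F yF(1)] by (rule trans)
  have "\<alpha> * 1 = \<alpha> * (x * \<sigma> y)"
  proof -
    have "\<alpha> * (x * \<sigma> y) = (\<alpha> * x) * \<sigma> y" by (simp only: mult.assoc)
    also have "\<dots> = \<sigma> \<alpha> * \<sigma> y" using x(2) by (simp only:)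
    also have "\<dots> = \<alpha>" using e1 by (rule sym)
    finally show ?thesis by (simp only: mult_1_right)
  qed
  then have "1 = x * \<sigma> y" using mult_left_cancel[OF \<alpha>0, of 1 "x * \<sigma> y"] by blast
  then have xy: "x * \<sigma> y = 1" by (rule sym)
  have "\<sigma> \<alpha> / \<alpha> = x" using x(2) \<alpha>0 by simp
  then show ?thesis using x(1) sy xy unfolding units_iff by blast
qed

end

theorem lemma3p15:
  fixes F :: "complex set" and d :: nat and \<alpha> :: complex
    and s :: "(complex \<Rightarrow> complex) \<Rightarrow> real"
  assumes "subfield_C F"
    and "degree_Q F = 2 ^ d"
    and "totally_real F"
    and "galois_Q F"
    and "\<alpha> \<in> F"
    and "Re (field_norm F \<alpha>) < 0"
    and "\<forall>\<sigma>\<in>embeddings F. \<sigma> ` principal_ideal F \<alpha> = principal_ideal F \<alpha>"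
    and "\<forall>\<sigma>\<in>embeddings F. s \<sigma> = 1 \<or> s \<sigma> = -1"
    and "(\<Prod>\<sigma>\<in>embeddings F. s \<sigma>) = 1"
  shows "\<exists>u\<in>units_of_integers F. \<forall>\<sigma>\<in>embeddings F. sgn (Re (\<sigma> u)) = s \<sigma>"
proof -
  interpret galF F
    by (intro galF.intro sfield.intro galF_axioms.intro) (rule assms(1), rule assms(4))
  have EE: "embeddings F = E" by (simp add: E_def)
  have idE: "idF \<in> E" by (rule idF_in_E)
  have \<alpha>F: "\<alpha> \<in> F" by (rule assms(5))
  have finE: "finite E"
  proof (rule ccontr)
    assume "infinite E"
    then have "field_norm F \<alpha> = 1" by (simp add: field_norm_def EE)
    then show False using assms(6) by simp
  qed
  have dimF: "Qvs.dim F = 2 ^ d" using assms(2) degree_Q_Qvs by simp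
  obtain k where cardE: "card E = 2 ^ k" using two_group[OF finE dimF] by blast
  have real: "\<sigma> x \<in> \<real>" if "\<sigma> \<in> E" "x \<in> F" for \<sigma> x
    using assms(3) that unfolding totally_real_def EE by blast
  have \<alpha>0: "\<alpha> \<noteq> 0"
  proof
    assume a0: "\<alpha> = 0"
    have "idF \<alpha> = 0" using a0 by (simp add: idF_def)
    then have "field_norm F \<alpha> = 0" unfolding field_norm_def EE
      using finE idE by (intro prod_zero) auto
    then show False using assms(6) by simp
  qed
  define r where "r \<sigma> = Re (\<sigma> \<alpha>)" for \<sigma> :: "complex \<Rightarrow> complex"
  have r\<alpha>: "\<sigma> \<alpha> = of_real (r \<sigma>)" if "\<sigma> \<in> E" for \<sigma>
    using real[OF that \<alpha>F] by (simp add: r_def)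
  have r0: "r \<sigma> \<noteq> 0" if "\<sigma> \<in> E" for \<sigma>
  proof
    assume "r \<sigma> = 0"
    then have "\<sigma> \<alpha> = 0" using r\<alpha>[OF that] by simp
    then show False using e_nonzero[OF that \<alpha>F \<alpha>0] by simp
  qed
  define w where "w \<sigma> = sgn (r \<sigma>)" for \<sigma> :: "complex \<Rightarrow> complex"
  have w1: "w \<tau> = 1 \<or> w \<tau> = -1" if "\<tau> \<in> E" for \<tau>
    using r0[OF that] by (simp add: w_def sgn_if)
  have wprod: "(\<Prod>\<tau>\<in>E. w \<tau>) = -1"
  proof -
    have "field_norm F \<alpha> = (\<Prod>\<tau>\<in>E. of_real (r \<tau>))"
      unfolding field_norm_def EE by (rule prod.cong) (auto simp: r\<alpha>)
    also have "\<dots> = of_real (\<Prod>\<tau>\<in>E. r \<tau>)" by (rule of_real_prod[symmetric])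
    finally have fn: "field_norm F \<alpha> = of_real (\<Prod>\<tau>\<in>E. r \<tau>)" .
    have "Re (field_norm F \<alpha>) = (\<Prod>\<tau>\<in>E. r \<tau>)" by (simp only: fn Re_complex_of_real)
    then have "(\<Prod>\<tau>\<in>E. r \<tau>) < 0" using assms(6) by simp
    then have "sgn (\<Prod>\<tau>\<in>E. r \<tau>) = -1" by simp
    then show ?thesis unfolding w_def sgn_prod_real by simp
  qed
  have s1: "\<forall>\<tau>\<in>E. s \<tau> = 1 \<or> s \<tau> = -1" using assms(8) EE by simp
  have sp: "(\<Prod>\<tau>\<in>E. s \<tau>) = 1" using assms(9) EE by simp
  obtain X where X: "X \<subseteq> E" "even (card X)" "\<forall>\<tau>\<in>E. L w X \<tau> = s \<tau>"
    using sign_surj[OF finE cardE w1 wprod s1 sp] by blast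
  have LX: "L w X \<tau> = (\<Prod>\<sigma>\<in>X. w (\<tau> \<circ> \<sigma>))" for \<tau>
    by (rule L_def[OF finE cardE w1 wprod])
  have inv: "\<forall>\<sigma>\<in>E. \<sigma> ` principal_ideal F \<alpha> = principal_ideal F \<alpha>" using assms(7) EE by simp
  define u where "u = (\<Prod>\<sigma>\<in>X. \<sigma> \<alpha> / \<alpha>)"
  have uU: "u \<in> units_of_integers F"
    unfolding u_def using X(1) unit_quot[OF \<alpha>F \<alpha>0 inv] by (intro units_prod) blast
  have qF: "\<sigma> \<alpha> / \<alpha> \<in> F" if "\<sigma> \<in> E" for \<sigma>
    using Fdivide[OF e_in[OF that \<alpha>F] \<alpha>F] .
  have "sgn (Re (\<tau> u)) = s \<tau>" if t: "\<tau> \<in> E" for \<tau>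
  proof -
    have "\<tau> u = (\<Prod>\<sigma>\<in>X. \<tau> (\<sigma> \<alpha> / \<alpha>))"
      unfolding u_def by (rule e_prod[OF t]) (use qF X(1) in blast)
    also have "\<dots> = (\<Prod>\<sigma>\<in>X. of_real (r (\<tau> \<circ> \<sigma>) / r \<tau>))"
    proof (rule prod.cong)
      fix \<sigma> assume "\<sigma> \<in> X"
      then have sE: "\<sigma> \<in> E" using X(1) by blast
      have "\<tau> (\<sigma> \<alpha> / \<alpha>) = \<tau> (\<sigma> \<alpha>) / \<tau> \<alpha>" by (rule e_divide[OF t e_in[OF sE \<alpha>F] \<alpha>F])
      also have "\<dots> = (\<tau> \<circ> \<sigma>) \<alpha> / \<tau> \<alpha>" by simp
      also have "\<dots> = of_real (r (\<tau> \<circ> \<sigma>)) / of_real (r \<tau>)"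
        using r\<alpha>[OF comp_E[OF t sE]] r\<alpha>[OF t] by simp
      finally show "\<tau> (\<sigma> \<alpha> / \<alpha>) = of_real (r (\<tau> \<circ> \<sigma>) / r \<tau>)" by simp
    qed simp
    also have "\<dots> = of_real (\<Prod>\<sigma>\<in>X. r (\<tau> \<circ> \<sigma>) / r \<tau>)" by (rule of_real_prod[symmetric])
    finally have tu: "\<tau> u = of_real (\<Prod>\<sigma>\<in>X. r (\<tau> \<circ> \<sigma>) / r \<tau>)" .
    have "Re (\<tau> u) = (\<Prod>\<sigma>\<in>X. r (\<tau> \<circ> \<sigma>) / r \<tau>)" by (simp only: tu Re_complex_of_real)
    then have "sgn (Re (\<tau> u)) = (\<Prod>\<sigma>\<in>X. sgn (r (\<tau> \<circ> \<sigma>) / r \<tau>))"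
      by (simp add: sgn_prod_real)
    also have "\<dots> = (\<Prod>\<sigma>\<in>X. w (\<tau> \<circ> \<sigma>) * w \<tau>)"
    proof (rule prod.cong)
      fix \<sigma> assume "\<sigma> \<in> X"
      have "sgn (r (\<tau> \<circ> \<sigma>) / r \<tau>) = w (\<tau> \<circ> \<sigma>) / w \<tau>" by (simp add: w_def sgn_divide)
      also have "\<dots> = w (\<tau> \<circ> \<sigma>) * w \<tau>" using w1[OF t] by auto
      finally show "sgn (r (\<tau> \<circ> \<sigma>) / r \<tau>) = w (\<tau> \<circ> \<sigma>) * w \<tau>" .
    qed simp
    also have "\<dots> = (\<Prod>\<sigma>\<in>X. w (\<tau> \<circ> \<sigma>)) * w \<tau> ^ card X" by (simp add: prod.distrib)
    also have "w \<tau> ^ card X = 1" using w1[OF t] X(2) by (auto simp: power_minus_even)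
    also have "(\<Prod>\<sigma>\<in>X. w (\<tau> \<circ> \<sigma>)) = s \<tau>" using X(3) LX t by simp
    finally show ?thesis by simp
  qed
  then show ?thesis using uU EE by auto
qed

end
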